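(* Let $n\ge 2$ and $\sigma,\tau\in S_n$ with $\sigma^{\sf CT}\neq\tau^{\sf CT}$. Let $\omega$ and $\pi$ be the cycles of the disjoint cycle decomposition of $\sigma^{-1}\tau$ containing $n-1$ and $\sigma(n-1)$, respectively (a cycle being $(0)$, the identity, if the symbol is fixed). Suppose $\sigma^{-1}\tau=\rho\,\omega\,\pi$ if $\omega\neq\pi$ and $\sigma^{-1}\tau=\rho\,\omega$ if $\omega=\pi$, where $\rho\in S_n$ is disjoint from $\omega$ and $\pi$. Then $(\sigma^{\sf CT})^{-1}\tau^{\sf CT}=\rho\,\chi$ for some $\chi\in S_{n-1}$ disjoint from $\rho$, and: (1) if ${\rm hd}(\sigma^{\sf CT},\tau^{\sf CT})={\rm hd}(\sigma,\tau)$, then $\omega=(0)$ or $\pi=(0)$, and $\chi$ is a cycle with $|\chi|=|\omega\pi|$; (2) if ${\rm hd}(\sigma^{\sf CT},\tau^{\sf CT})={\rm hd}(\sigma,\tau)-1$, then (a) if $\omega=\pi$, either $\chi$ is a cycle with $|\chi|=|\omega|-1$, or $\chi$ is a product of two disjoint cycles $\omega',\pi'$ with $|\omega'|+|\pi'|=|\omega|-1$; (b) if $\omega\neq\pi$, $\chi$ is a cycle with $|\chi|=|\omega|+|\pi|-1$; (3) if ${\rm hd}(\sigma^{\sf CT},\tau^{\sf CT})={\rm hd}(\sigma,\tau)-2$, then $\omega=\pi$ and $\chi$ is a cycle with $|\chi|=|\omega|-2$; (4) if ${\rm hd}(\sigma^{\sf CT},\tau^{\sf CT})={\rm hd}(\sigma,\tau)-3$,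 then $\omega=\pi$, $|\omega|=3$ and $\chi=(0)$.
   Context: $S_n$ is the symmetric group on $\{0,1,\ldots,n-1\}$, with composition from left to right: $\tau\sigma(x):=\sigma(\tau(x))$, so $\sigma^{-1}\tau(x)=\tau(\sigma^{-1}(x))$. ${\rm hd}(\sigma,\tau)=|\{x:\sigma(x)\neq\tau(x)\}|$. The contraction of $\sigma\in S_n$ is $\sigma^{\sf CT}\in S_{n-1}$ (on $\{0,\ldots,n-2\}$) defined by $\sigma^{\sf CT}(x)=\sigma(n-1)$ if $x=\sigma^{-1}(n-1)$ and $\sigma^{\sf CT}(x)=\sigma(x)$ otherwise (i.e. delete $n-1$ from the cycle notation of $\sigma$). $|\rho|$ denotes the length of a cycle $\rho$; the identity permutation, written $(0)$, is regarded as a cycle of length $0$, and a symbol fixed by a permutation is said to belong to a cycle of length zero in its decomposition. When one of $\omega,\pi$ is $(0)$, $\omega\pi$ is a cycle and $|\omega\pi|$ is its length. *)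

theory Defs
  imports "HOL-Combinatorics.Permutations"
begin

text \<open>Permutations of {0,...,n-1} are functions nat => nat with f permutes {..<n}.
Products are read left to right: the product (p q) is the function q o p.\<close>

definition supp :: "(nat \<Rightarrow> nat) \<Rightarrow> nat set" where
  "supp f = {x. f x \<noteq> x}"

definition hd :: "nat \<Rightarrow> (nat \<Rightarrow> nat) \<Rightarrow> (nat \<Rightarrow> nat) \<Rightarrow> nat" where
  "hd n s t = card {x. x < n \<and> s x \<noteq> t x}"

definition ct :: "nat \<Rightarrow> (nat \<Rightarrow> nat) \<Rightarrow> (nat \<Rightarrow> nat)" where
  "ct n s x = (if n - 1 \<le> x then x else if s x = n - 1 then s (n - 1) else s x)"

definition cycle_of :: "(nat \<Rightarrow> nat) \<Rightarrow> nat \<Rightarrow> (nat \<Rightarrow> nat)" where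
  "cycle_of g x = (\<lambda>y. if (\<exists>k. (g ^^ k) x = y) then g y else y)"

definition is_cycle :: "(nat \<Rightarrow> nat) \<Rightarrow> bool" where
  "is_cycle f \<longleftrightarrow> finite (supp f) \<and> (\<exists>a. \<forall>x\<in>supp f. \<exists>k. (f ^^ k) a = x)"

definition cyc_len :: "(nat \<Rightarrow> nat) \<Rightarrow> nat" where
  "cyc_len f = card (supp f)"

end

theory Submission
  imports Defs "HOL-Combinatorics.Orbits"
begin

fun chain :: "(nat \<Rightarrow> nat) \<Rightarrow> nat list \<Rightarrow> bool" where
  "chain f (x # y # zs) = (f x = y \<and> chain f (y # zs))"
| "chain f _ = True"

lemma chain_Cons: "chain f (x # ys) = (chain f ys \<and> (ys \<noteq> [] \<longrightarrow> f x = List.hd ys))"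
  by (cases ys) auto

lemma chain_append:
  "chain f (xs @ ys) = (chain f xs \<and> chain f ys \<and> (xs \<noteq> [] \<longrightarrow> ys \<noteq> [] \<longrightarrow> f (last xs) = List.hd ys))"
  by (induction xs) (auto simp: chain_Cons)

lemma chain_nth: "chain f L \<Longrightarrow> Suc i < length L \<Longrightarrow> f (L!i) = L!(Suc i)"
proof (induction L arbitrary: i)
  case (Cons x ys)
  then show ?case by (cases i) (auto simp: chain_Cons hd_conv_nth)
qed simp

lemma chain_nthI: "(\<And>i. Suc i < length L \<Longrightarrow> f (L!i) = L!(Suc i)) \<Longrightarrow> chain f L"
proof (induction L)
  case (Cons x ys)
  have "chain f ys" using Cons.prems by (intro Cons.IH) (metis Suc_less_eq length_Cons nth_Cons_Suc)
  moreover have "ys \<noteq> [] \<longrightarrow> f x = List.hd ys" using Cons.prems[of 0] by (auto simp: hd_conv_nth)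
  ultimately show ?case by (simp add: chain_Cons)
qed simp

lemma chain_cong: "chain f L \<Longrightarrow> (\<And>x. x \<in> set (butlast L) \<Longrightarrow> f' x = f x) \<Longrightarrow> chain f' L"
  by (induction f L rule: chain.induct) auto

lemma chain_in: "chain f L \<Longrightarrow> y \<in> set (butlast L) \<Longrightarrow> f y \<in> set L"
  by (induction f L rule: chain.induct) auto

lemma set_nthE:
  assumes "x \<in> set L" obtains i where "i < length L" "x = L!i"
proof -
  from assms obtain i where "i < length L" "L!i = x" unfolding in_set_conv_nth by blast
  then show ?thesis using that by blast
qed

definition cyc :: "(nat \<Rightarrow> nat) \<Rightarrow> nat list \<Rightarrow> bool" where
  "cyc f L = (chain f L \<and> (L \<noteq> [] \<longrightarrow> f (last L) = List.hd L))"

lemma cyc_nth: "cyc f L \<Longrightarrow> i < length L \<Longrightarrow> f (L!i) = L!(Suc i mod length L)"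
proof -
  assume c: "cyc f L" and i: "i < length L"
  show ?thesis
  proof (cases "Suc i < length L")
    case True then show ?thesis using c chain_nth by (simp add: cyc_def)
  next
    case False
    then have "i = length L - 1" "Suc i = length L" using i by auto
    then show ?thesis using c i by (auto simp: cyc_def last_conv_nth hd_conv_nth)
  qed
qed

lemma cyc_pow: "cyc f L \<Longrightarrow> i < length L \<Longrightarrow> (f^^k) (L!i) = L!((i+k) mod length L)"
proof (induction k)
  case 0 then show ?case by simp
next
  case (Suc k)
  have "(f^^Suc k) (L!i) = f (L!((i+k) mod length L))" using Suc by simp
  also have "\<dots> = L!(Suc ((i+k) mod length L) mod length L)"
    using Suc.prems by (intro cyc_nth) (auto intro!: mod_less_divisor)
  also have "Suc ((i+k) mod length L) mod length L = (i + Suc k) mod length L"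
    by (simp add: mod_Suc_eq)
  finally show ?case .
qed

lemma cyc_closed: "cyc f L \<Longrightarrow> y \<in> set L \<Longrightarrow> f y \<in> set L"
  by (metis cyc_nth in_set_conv_nth length_pos_if_in_set mod_less_divisor)

lemma cyc_orbit: "cyc f L \<Longrightarrow> y \<in> set L \<Longrightarrow> {z. \<exists>k. (f^^k) y = z} = set L"
proof (intro set_eqI iffI)
  fix z assume c: "cyc f L" and y: "y \<in> set L" and "z \<in> {z. \<exists>k. (f^^k) y = z}"
  then obtain k where "(f^^k) y = z" by auto
  moreover have "(f^^k) y \<in> set L" for k by (induction k) (use c y cyc_closed in auto)
  ultimately show "z \<in> set L" by auto
next
  fix z assume c: "cyc f L" and y: "y \<in> set L" and z: "z \<in> set L"
  obtain i where i: "i < length L" "y = L!i" using y by (auto simp: in_set_conv_nth)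
  obtain j where j: "j < length L" "z = L!j" using z by (auto simp: in_set_conv_nth)
  have "(f^^(j + length L - i)) y = L!((i + (j + length L - i)) mod length L)"
    using cyc_pow[OF c i(1)] i by simp
  also have "(i + (j + length L - i)) mod length L = j" using i j by simp
  finally show "z \<in> {z. \<exists>k. (f^^k) y = z}" using j by auto
qed

lemma cyc_cong: "cyc f L \<Longrightarrow> (\<And>x. x \<in> set L \<Longrightarrow> f' x = f x) \<Longrightarrow> cyc f' L"
  unfolding cyc_def
  by (metis chain_cong in_set_butlastD last_in_set)

lemma cyc_main:
  assumes d: "distinct L" and c: "cyc f L" and out: "\<And>y. y \<notin> set L \<Longrightarrow> f y = y"
  shows "supp f = (if 2 \<le> length L then set L else {}) \<and> is_cycle f \<and>
         cyc_len f = (if 2 \<le> length L then length L else 0)"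
proof -
  have s: "supp f = (if 2 \<le> length L then set L else {})"
  proof (cases "2 \<le> length L")
    case True
    have "f x \<noteq> x" if xL: "x \<in> set L" for x
    proof -
      obtain i where i: "i < length L" "x = L!i" using xL by (rule set_nthE)
      have "Suc i mod length L \<noteq> i"
      proof (cases "Suc i < length L")
        case True then show ?thesis by simp
      next
        case False then have "Suc i = length L" using i by simp
        then show ?thesis using \<open>2 \<le> length L\<close> by simp
      qed
      moreover have "Suc i mod length L < length L" using i(1) by (intro mod_less_divisor) linarith
      ultimately have "L!(Suc i mod length L) \<noteq> L!i"
        using d i by (simp add: nth_eq_iff_index_eq)
      then show ?thesis using cyc_nth[OF c i(1)] i by simp
    qed
    then have "supp f = set L" using out unfolding supp_def by blast
    then show ?thesis using True by simp
  next
    case False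
    have "f x = x" for x
    proof (cases "x \<in> set L")
      case True
      then obtain i where i: "i < length L" "x = L!i" by (rule set_nthE)
      have "length L = 1" using False i(1) by linarith
      moreover have "i = 0" using i(1) \<open>length L = 1\<close> by linarith
      ultimately show ?thesis using cyc_nth[OF c i(1)] i by simp
    next
      case False then show ?thesis using out by simp
    qed
    then show ?thesis using False by (simp add: supp_def)
  qed
  have "is_cycle f"
  proof (cases "L = []")
    case True then show ?thesis using s by (auto simp: is_cycle_def)
  next
    case False
    have "\<forall>x\<in>supp f. \<exists>k. (f ^^ k) (L!0) = x"
    proof
      fix x assume "x \<in> supp f"
      then have "x \<in> set L" using s by (auto split: if_splits)
      then obtain j where j: "j < length L" "x = L!j" by (rule set_nthE)
      have "(f ^^ j) (L!0) = L!((0 + j) mod length L)" using j by (intro cyc_pow[OF c]) auto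
      then show "\<exists>k. (f ^^ k) (L!0) = x" using j by auto
    qed
    moreover have "finite (supp f)" using s by simp
    ultimately show ?thesis unfolding is_cycle_def by blast
  qed
  moreover have "cyc_len f = (if 2 \<le> length L then length L else 0)"
    unfolding cyc_len_def using s d by (simp add: distinct_card)
  ultimately show ?thesis using s by blast
qed

lemma cyc_permutes:
  assumes d: "distinct L" and c: "cyc f L" and out: "\<And>y. y \<notin> set L \<Longrightarrow> f y = y"
  shows "f permutes set L"
proof -
  have im: "f ` set L \<subseteq> set L" using c cyc_closed by auto
  have "inj_on f (set L)"
  proof (rule inj_onI)
    fix x y assume "x \<in> set L" "y \<in> set L" "f x = f y"
    then obtain i j where i: "i < length L" "x = L!i" and j: "j < length L" "y = L!j"
      by (metis set_nthE)
    have "L!(Suc i mod length L) = L!(Suc j mod length L)"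
      using cyc_nth[OF c i(1)] cyc_nth[OF c j(1)] \<open>f x = f y\<close> i j by simp
    moreover have "Suc i mod length L < length L" "Suc j mod length L < length L"
      using i(1) j(1) by (intro mod_less_divisor, linarith)+
    ultimately have e: "Suc i mod length L = Suc j mod length L" using d by (simp add: nth_eq_iff_index_eq)
    have "Suc i mod length L = (if Suc i = length L then 0 else Suc i)"
         "Suc j mod length L = (if Suc j = length L then 0 else Suc j)" using i(1) j(1) by auto
    then have "i = j" using e i(1) j(1) by (auto split: if_splits)
    then show "x = y" using i j by simp
  qed
  then have "bij_betw f (set L) (set L)" using im by (simp add: endo_inj_surj bij_betw_def)
  then show ?thesis using out by (intro bij_imp_permutes) auto
qed

lemma orbit_list:
  assumes "permutation g"
  shows "\<exists>L. distinct L \<and> cyc g L \<and> L \<noteq> [] \<and> List.hd L = x \<and> set L = {y. \<exists>k. (g^^k) x = y}"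
proof -
  have xo: "x \<in> orbit g x" using assms by (rule permutation_self_in_orbit)
  define k where "k = funpow_dist1 g x x"
  have gk: "(g^^k) x = x" unfolding k_def using funpow_dist1_prop[OF xo] .
  have inj: "inj_on (\<lambda>i. (g^^i) x) {0..<k}" unfolding k_def using inj_on_funpow_dist1[OF xo] .
  define L where "L = map (\<lambda>i. (g^^i) x) [0..<k]"
  have k0: "0 < k" unfolding k_def by simp
  have "distinct L" unfolding L_def using inj by (simp add: distinct_map)
  moreover have "chain g L" unfolding L_def by (intro chain_nthI) auto
  moreover have "g (last L) = List.hd L"
  proof -
    obtain k' where k': "k = Suc k'" using k0 by (cases k) auto
    have "last L = (g^^k') x" unfolding L_def k' by simp
    moreover have "List.hd L = x" unfolding L_def k' by (simp add: hd_map del: upt_Suc)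
    ultimately show ?thesis using gk unfolding k' by simp
  qed
  moreover have "L \<noteq> []" "List.hd L = x" unfolding L_def using k0 by (auto simp: hd_map)
  moreover have "set L = {y. \<exists>k. (g^^k) x = y}"
  proof -
    have "set L = {(g ^^ m) x| m. m < k}" unfolding L_def by auto
    also have "\<dots> = orbit g x" using orbit_altdef_bounded[OF gk k0] by simp
    also have "\<dots> = {(g ^^ n) x | n. True}" using orbit_altdef_self_in[OF xo] .
    finally show ?thesis by auto
  qed
  ultimately show ?thesis by (auto simp: cyc_def)
qed


lemma perm_lt: "p permutes {..<n} \<Longrightarrow> x < n \<Longrightarrow> p x < n"
  by (metis lessThan_iff permutes_in_image)

lemma ct_permutes:
  assumes s: "\<sigma> permutes {..<n}" and n: "1 \<le> n"
  shows "ct n \<sigma> permutes {..<n-1}"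
proof -
  have inj: "\<sigma> x = \<sigma> y \<Longrightarrow> x = y" for x y using s by (meson permutes_inj injD)
  have rng: "x < n \<Longrightarrow> \<sigma> x < n" for x using s by (rule perm_lt)
  have im: "ct n \<sigma> ` {..<n-1} \<subseteq> {..<n-1}"
  proof
    fix y assume "y \<in> ct n \<sigma> ` {..<n-1}"
    then obtain x where x: "x < n - 1" "y = ct n \<sigma> x" by auto
    show "y \<in> {..<n-1}"
    proof (cases "\<sigma> x = n - 1")
      case True
      then have "\<sigma> (n-1) \<noteq> n - 1" using inj[of x "n-1"] x by auto
      moreover have "\<sigma> (n-1) < n" using rng n by simp
      ultimately show ?thesis using x True by (simp add: ct_def)
    next
      case False
      moreover have "\<sigma> x < n" using rng x by simp
      ultimately show ?thesis using x by (simp add: ct_def)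
    qed
  qed
  have "inj_on (ct n \<sigma>) {..<n-1}"
  proof (rule inj_onI)
    fix x y assume x: "x \<in> {..<n-1}" and y: "y \<in> {..<n-1}" and e: "ct n \<sigma> x = ct n \<sigma> y"
    show "x = y"
    proof (cases "\<sigma> x = n - 1"; cases "\<sigma> y = n - 1")
      assume "\<sigma> x = n - 1" "\<sigma> y = n - 1" then show ?thesis using inj by metis
    next
      assume a: "\<sigma> x = n - 1" "\<sigma> y \<noteq> n - 1"
      then have "\<sigma> (n - 1) = \<sigma> y" using e x y by (simp add: ct_def)
      then show ?thesis using inj y by force
    next
      assume a: "\<sigma> x \<noteq> n - 1" "\<sigma> y = n - 1"
      then have "\<sigma> (n - 1) = \<sigma> x" using e x y by (simp add: ct_def)
      then show ?thesis using inj x by force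
    next
      assume a: "\<sigma> x \<noteq> n - 1" "\<sigma> y \<noteq> n - 1"
      then have "\<sigma> x = \<sigma> y" using e x y by (simp add: ct_def)
      then show ?thesis using inj by metis
    qed
  qed
  then have "bij_betw (ct n \<sigma>) {..<n-1} {..<n-1}" using im
    by (simp add: endo_inj_surj bij_betw_def)
  then show ?thesis by (rule bij_imp_permutes) (simp add: ct_def)
qed

lemma ct_inv:
  assumes s: "\<sigma> permutes {..<n}" and n: "1 \<le> n" and y: "y < n - 1"
  shows "inv (ct n \<sigma>) y = (if y = \<sigma> (n-1) then inv \<sigma> (n-1) else inv \<sigma> y)"
proof -
  have p: "ct n \<sigma> permutes {..<n-1}" using ct_permutes[OF s n] .
  have inv1: "\<sigma> (inv \<sigma> z) = z" "inv \<sigma> (\<sigma> z) = z" for z using s permutes_inverses by metis+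
  have rng: "x < n \<Longrightarrow> inv \<sigma> x < n" for x using permutes_inv[OF s] by (rule perm_lt)
  show ?thesis
  proof (cases "y = \<sigma> (n-1)")
    case True
    have "inv \<sigma> (n-1) \<noteq> n - 1" using True y inv1(1)[of "n-1"] by auto
    moreover have "inv \<sigma> (n-1) < n" using rng n by simp
    ultimately have "inv \<sigma> (n-1) < n - 1" by linarith
    then have "ct n \<sigma> (inv \<sigma> (n-1)) = y" using True inv1 by (simp add: ct_def)
    then show ?thesis using True permutes_inv_eq[OF p] by simp
  next
    case False
    have "inv \<sigma> y \<noteq> n - 1" using False inv1 by metis
    moreover have "inv \<sigma> y < n" using rng y by simp
    ultimately have "inv \<sigma> y < n - 1" by linarith
    then have "ct n \<sigma> (inv \<sigma> y) = y" using False y inv1 by (simp add: ct_def)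
    then show ?thesis using False permutes_inv_eq[OF p] by simp
  qed
qed

lemma g'_formula:
  assumes s: "\<sigma> permutes {..<n}" and t: "\<tau> permutes {..<n}" and n: "1 \<le> n" and y: "y < n - 1"
  shows "(ct n \<tau> \<circ> inv (ct n \<sigma>)) y =
    (if y = \<sigma> (n-1) then (if \<tau> (inv \<sigma> (n-1)) = n-1 then \<tau> (n-1) else \<tau> (inv \<sigma> (n-1)))
     else (if \<tau> (inv \<sigma> y) = n-1 then \<tau> (n-1) else \<tau> (inv \<sigma> y)))"
proof -
  have inv1: "\<sigma> (inv \<sigma> z) = z" "inv \<sigma> (\<sigma> z) = z" for z using s permutes_inverses by metis+
  have rng: "x < n \<Longrightarrow> inv \<sigma> x < n" for x using permutes_inv[OF s] by (rule perm_lt)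
  show ?thesis
  proof (cases "y = \<sigma> (n-1)")
    case True
    have "inv \<sigma> (n-1) \<noteq> n - 1" using True y inv1(1)[of "n-1"] by auto
    moreover have "inv \<sigma> (n-1) < n" using rng n by simp
    ultimately have "inv \<sigma> (n-1) < n - 1" by linarith
    then show ?thesis using True ct_inv[OF s n y] by (simp add: ct_def)
  next
    case False
    have "inv \<sigma> y \<noteq> n - 1" using False inv1 by metis
    moreover have "inv \<sigma> y < n" using rng y by simp
    ultimately have "inv \<sigma> y < n - 1" by linarith
    then show ?thesis using False ct_inv[OF s n y] by (simp add: ct_def)
  qed
qed

lemma hd_supp:
  assumes s: "\<sigma> permutes {..<n}" and t: "\<tau> permutes {..<n}"
  shows "hd n \<sigma> \<tau> = card (supp (\<tau> \<circ> inv \<sigma>))"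
proof -
  have inv1: "\<sigma> (inv \<sigma> z) = z" "inv \<sigma> (\<sigma> z) = z" for z using s permutes_inverses by metis+
  have g: "(\<tau> \<circ> inv \<sigma>) permutes {..<n}" using permutes_compose[OF permutes_inv[OF s] t] .
  have eq: "\<sigma> ` {x. x < n \<and> \<sigma> x \<noteq> \<tau> x} = supp (\<tau> \<circ> inv \<sigma>)"
  proof (intro set_eqI iffI)
    fix y assume "y \<in> \<sigma> ` {x. x < n \<and> \<sigma> x \<noteq> \<tau> x}"
    then show "y \<in> supp (\<tau> \<circ> inv \<sigma>)" using inv1 by (auto simp: supp_def)
  next
    fix y assume y: "y \<in> supp (\<tau> \<circ> inv \<sigma>)"
    have "y < n" using y permutes_not_in[OF g, of y] unfolding supp_def by (cases "y < n") auto
    then have "inv \<sigma> y < n" by (rule perm_lt[OF permutes_inv[OF s]])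
    then show "y \<in> \<sigma> ` {x. x < n \<and> \<sigma> x \<noteq> \<tau> x}" using y inv1
      by (auto simp: supp_def intro!: image_eqI[where x="inv \<sigma> y"])
  qed
  have inj: "inj_on \<sigma> {x. x < n \<and> \<sigma> x \<noteq> \<tau> x}" using permutes_inj[OF s] by (rule inj_on_subset) simp
  show ?thesis unfolding hd_def using card_image[OF inj] eq by simp
qed


lemma cyc_back:
  assumes c: "cyc g L" and g: "g permutes S" and x: "g x \<in> set L"
  shows "x \<in> set L"
proof -
  have "g ` set L \<subseteq> set L" using c cyc_closed by auto
  moreover have "inj_on g (set L)" using permutes_inj[OF g] by (rule inj_on_subset) simp
  ultimately have "g ` set L = set L" by (intro endo_inj_surj) auto
  then obtain y where "y \<in> set L" "g y = g x" using x by (metis imageE)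
  then show ?thesis using permutes_inj[OF g] by (metis injD)
qed

lemma supp_empty_id: "supp f = {} \<Longrightarrow> f = id"
  by (auto simp: supp_def fun_eq_iff)

lemma funpow_lt: "g permutes {..<n} \<Longrightarrow> x < n \<Longrightarrow> (g^^k) x < n"
  by (induction k) (auto intro: perm_lt)

definition cmain where
 "cmain n a g g' \<rho> \<omega> \<pi> \<chi> \<longleftrightarrow> (\<chi> permutes {..<a} \<and> supp \<chi> \<inter> supp \<rho> = {} \<and> g' = \<chi> \<circ> \<rho> \<and>
    (card (supp g') = card (supp g) \<longrightarrow>
         (\<omega> = id \<or> \<pi> = id) \<and> is_cycle \<chi> \<and> cyc_len \<chi> = cyc_len (\<pi> \<circ> \<omega>)) \<and>
      (card (supp g') + 1 = card (supp g) \<longrightarrow>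
         (\<omega> = \<pi> \<longrightarrow>
            (is_cycle \<chi> \<and> cyc_len \<chi> + 1 = cyc_len \<omega>) \<or>
            (\<exists>\<omega>' \<pi>'. is_cycle \<omega>' \<and> is_cycle \<pi>' \<and> supp \<omega>' \<inter> supp \<pi>' = {} \<and>
               \<chi> = \<pi>' \<circ> \<omega>' \<and> cyc_len \<omega>' + cyc_len \<pi>' + 1 = cyc_len \<omega>)) \<and>
         (\<omega> \<noteq> \<pi> \<longrightarrow> is_cycle \<chi> \<and> cyc_len \<chi> + 1 = cyc_len \<omega> + cyc_len \<pi>)) \<and>
      (card (supp g') + 2 = card (supp g) \<longrightarrow>
         \<omega> = \<pi> \<and> is_cycle \<chi> \<and> cyc_len \<chi> + 2 = cyc_len \<omega>) \<and>
      (card (supp g') + 3 = card (supp g) \<longrightarrow>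
         \<omega> = \<pi> \<and> cyc_len \<omega> = 3 \<and> \<chi> = id))"

lemma main_g:
  fixes g g' \<rho> :: "nat \<Rightarrow> nat"
  assumes n: "2 \<le> n" and a: "a = n - 1" and g: "g permutes {..<n}" and b: "b < n"
    and g'1: "\<And>y. y < a \<Longrightarrow> g' y = (if y = b then (if g a = a then g b else g a)
                                   else (if g y = a then g b else g y))"
    and g'2: "\<And>y. a \<le> y \<Longrightarrow> g' y = y"
    and \<rho>: "\<rho> permutes {..<n}"
    and \<omega>: "\<omega> = cycle_of g a" and \<pi>: "\<pi> = cycle_of g b"
    and d1: "supp \<rho> \<inter> supp \<omega> = {}" and d2: "supp \<rho> \<inter> supp \<pi> = {}"
    and H: "if \<omega> \<noteq> \<pi> then g = \<pi> \<circ> \<omega> \<circ> \<rho> else g = \<omega> \<circ> \<rho>"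
  shows "\<exists>\<chi>. cmain n a g g' \<rho> \<omega> \<pi> \<chi>"
proof -
  have an: "a < n" using a n by simp
  have perm: "permutation g" using g by (auto simp: permutation_permutes)
  obtain A where A: "distinct A" "cyc g A" "A \<noteq> []" "List.hd A = a" "set A = {y. \<exists>k. (g^^k) a = y}"
    using orbit_list[OF perm] by blast
  obtain B where B: "distinct B" "cyc g B" "B \<noteq> []" "List.hd B = b" "set B = {y. \<exists>k. (g^^k) b = y}"
    using orbit_list[OF perm] by blast
  have aA: "a \<in> set A" using hd_in_set[OF A(3)] A(4) by simp
  have bB: "b \<in> set B" using hd_in_set[OF B(3)] B(4) by simp
  have \<omega>eq: "\<omega> = (\<lambda>y. if y \<in> set A then g y else y)" unfolding \<omega> cycle_of_def A(5) by auto
  have \<pi>eq: "\<pi> = (\<lambda>y. if y \<in> set B then g y else y)" unfolding \<pi> cycle_of_def B(5) by auto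
  have supp\<omega>: "supp \<omega> = set A \<inter> supp g" unfolding \<omega>eq supp_def by auto
  have supp\<pi>: "supp \<pi> = set B \<inter> supp g" unfolding \<pi>eq supp_def by auto
  define Orb where "Orb = set A \<union> set B"
  have Olt: "x \<in> Orb \<Longrightarrow> x < n" for x
    unfolding Orb_def A(5) B(5) using funpow_lt[OF g] an b by auto
  have Ofw: "x \<in> Orb \<Longrightarrow> g x \<in> Orb" for x unfolding Orb_def using A(2) B(2) cyc_closed by blast
  have Obk: "g x \<in> Orb \<Longrightarrow> x \<in> Orb" for x unfolding Orb_def using A(2) B(2) cyc_back[OF _ g] by blast
  have aO: "a \<in> Orb" and bO: "b \<in> Orb" using aA bB by (auto simp: Orb_def)
  have \<rho>inj: "\<rho> x = \<rho> y \<Longrightarrow> x = y" for x y using \<rho> by (meson permutes_inj injD)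
  define F where "F = (if \<omega> \<noteq> \<pi> then \<pi> \<circ> \<omega> else \<omega>)"
  have gF: "g = F \<circ> \<rho>" using H unfolding F_def by (auto split: if_splits)
  have Fid: "y \<notin> supp \<omega> \<Longrightarrow> y \<notin> supp \<pi> \<Longrightarrow> F y = y" for y
    unfolding F_def supp_def by auto
  have \<rho>eq: "\<rho> x = (if x \<in> Orb then x else g x)" for x
  proof (cases "\<rho> x = x")
    case False
    then have "\<rho> (\<rho> x) \<noteq> \<rho> x" using \<rho>inj[of "\<rho> x" x] by auto
    then have "\<rho> x \<in> supp \<rho>" by (simp add: supp_def)
    then have "\<rho> x \<notin> supp \<omega>" "\<rho> x \<notin> supp \<pi>" using d1 d2 by auto
    then have gx: "g x = \<rho> x" using gF Fid by simp
    have "x \<in> supp \<rho>" using False by (simp add: supp_def)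
    then have "x \<notin> supp \<omega>" "x \<notin> supp \<pi>" using d1 d2 by auto
    moreover have "x \<in> supp g" using gx False by (simp add: supp_def)
    ultimately have "x \<notin> Orb" unfolding Orb_def supp\<omega> supp\<pi> by auto
    then show ?thesis using gx by simp
  next
    case True
    show ?thesis
    proof (cases "x \<in> Orb")
      case False
      then have "x \<notin> supp \<omega>" "x \<notin> supp \<pi>" unfolding Orb_def supp\<omega> supp\<pi> by auto
      then have "g x = x" using gF Fid True by simp
      then show ?thesis using True by simp
    qed (use True in simp)
  qed
  define \<chi> where "\<chi> = (\<lambda>x. if x \<in> Orb \<and> x \<noteq> a then g' x else x)"
  have g'out: "x \<notin> Orb \<Longrightarrow> g' x = g x" for x
  proof -
    assume x: "x \<notin> Orb"
    show ?thesis
    proof (cases "x < a")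
      case True
      have "x \<noteq> b" using x bO by auto
      moreover have "g x \<noteq> a" using x aO Obk by auto
      ultimately show ?thesis using g'1[OF True] by simp
    next
      case False
      then have "n \<le> x" using x aO a by (cases "x = a") auto
      then show ?thesis using g'2[of x] False permutes_not_in[OF g, of x] by simp
    qed
  qed
  have g'a: "g' a = a" using g'2 by simp
  have comp: "g' = \<chi> \<circ> \<rho>"
  proof
    fix x
    show "g' x = (\<chi> \<circ> \<rho>) x"
    proof (cases "x \<in> Orb")
      case True then show ?thesis using \<rho>eq[of x] g'a by (auto simp: \<chi>_def)
    next
      case False
      then have "g x \<notin> Orb" using Obk by blast
      then show ?thesis using \<rho>eq[of x] False g'out by (simp add: \<chi>_def)
    qed
  qed
  have supp\<chi>: "supp \<chi> \<subseteq> Orb - {a}" unfolding \<chi>_def supp_def by auto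
  have supp\<rho>: "supp \<rho> = supp g - Orb"
  proof (intro set_eqI)
    fix x show "x \<in> supp \<rho> \<longleftrightarrow> x \<in> supp g - Orb" using \<rho>eq[of x] unfolding supp_def by simp
  qed
  have disj: "supp \<chi> \<inter> supp \<rho> = {}" using supp\<chi> supp\<rho> by blast
  have finO: "finite Orb" unfolding Orb_def by simp
  have "supp g \<subseteq> {..<n}"
  proof
    fix x assume "x \<in> supp g" then show "x \<in> {..<n}" using permutes_not_in[OF g, of x] by (auto simp: supp_def)
  qed
  then have fin_g: "finite (supp g)" by (rule finite_subset) simp
  have "supp g' \<subseteq> {..<a}"
  proof
    fix x assume "x \<in> supp g'" then show "x \<in> {..<a}" using g'2[of x] by (cases "a \<le> x") (auto simp: supp_def)
  qed
  then have fin_g': "finite (supp g')" by (rule finite_subset) simp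
  have cg: "card (supp g) = card (supp \<rho>) + card (supp \<omega> \<union> supp \<pi>)"
  proof -
    have "supp g = supp \<rho> \<union> (supp \<omega> \<union> supp \<pi>)" unfolding supp\<rho> supp\<omega> supp\<pi> Orb_def by auto
    moreover have "supp \<rho> \<inter> (supp \<omega> \<union> supp \<pi>) = {}" using d1 d2 by auto
    moreover have "finite (supp \<rho>)" "finite (supp \<omega> \<union> supp \<pi>)"
      using fin_g unfolding supp\<rho> supp\<omega> supp\<pi> by auto
    ultimately show ?thesis by (simp add: card_Un_disjoint)
  qed
  have cg': "card (supp g') = card (supp \<rho>) + cyc_len \<chi>"
  proof -
    have "supp g' = supp \<rho> \<union> supp \<chi>"
    proof -
      have "supp g' - Orb = supp g - Orb"
      proof (intro set_eqI)
        fix x show "x \<in> supp g' - Orb \<longleftrightarrow> x \<in> supp g - Orb" using g'out[of x] unfolding supp_def by auto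
      qed
      then have "supp g' - Orb = supp \<rho>" using supp\<rho> by simp
      moreover have "supp g' \<inter> Orb = supp \<chi>" unfolding supp_def \<chi>_def using g'a by auto
      ultimately show ?thesis by blast
    qed
    moreover have "finite (supp \<rho>)" "finite (supp \<chi>)" using fin_g' \<open>supp g' = _\<close> by auto
    moreover have "supp \<rho> \<inter> supp \<chi> = {}" using disj by auto
    ultimately show ?thesis unfolding cyc_len_def by (simp add: card_Un_disjoint)
  qed
  have chiv: "\<chi> x = (if x = b then (if g a = a then g b else g a) else (if g x = a then g b else g x))"
    if "x \<in> Orb" "x \<noteq> a" for x
  proof -
    have "x < a" using Olt[OF that(1)] that(2) a by linarith
    then show ?thesis using that g'1 by (simp add: \<chi>_def)
  qed
  have Orba: "x < a" if "x \<in> Orb" "x \<noteq> a" for x using Olt[OF that(1)] that(2) a by linarith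
  have chiout: "\<chi> x = x" if "x \<notin> Orb - {a}" for x using that by (auto simp: \<chi>_def)
  have \<omega>cyc: "cyc \<omega> A" using A(2) by (rule cyc_cong) (simp add: \<omega>eq)
  have \<omega>main: "supp \<omega> = (if 2 \<le> length A then set A else {}) \<and> is_cycle \<omega> \<and>
         cyc_len \<omega> = (if 2 \<le> length A then length A else 0)"
    using A(1) \<omega>cyc by (rule cyc_main) (simp add: \<omega>eq)
  have \<pi>cyc: "cyc \<pi> B" using B(2) by (rule cyc_cong) (simp add: \<pi>eq)
  have \<pi>main: "supp \<pi> = (if 2 \<le> length B then set B else {}) \<and> is_cycle \<pi> \<and>
         cyc_len \<pi> = (if 2 \<le> length B then length B else 0)"
    using B(1) \<pi>cyc by (rule cyc_main) (simp add: \<pi>eq)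
  obtain xs where Axs: "A = a # xs" using A(3,4) by (cases A) auto
  have cA1: "chain g xs" and cA2: "xs \<noteq> [] \<Longrightarrow> g a = List.hd xs"
    and cA3: "xs \<noteq> [] \<Longrightarrow> g (last xs) = a" and cA4: "xs = [] \<Longrightarrow> g a = a"
    using A(2) unfolding Axs cyc_def by (auto simp: chain_Cons)
  have axs: "a \<notin> set xs" and dxs: "distinct xs" using A(1) Axs by auto
  have lenA: "length A = Suc (length xs)" using Axs by simp
  have xsOrb: "set xs \<subseteq> Orb" using Axs by (auto simp: Orb_def)
  have cyclen_id: "cyc_len id = 0" by (simp add: cyc_len_def supp_def)
  show ?thesis
  proof (cases "b = a")
    case True
    have \<pi>\<omega>: "\<pi> = \<omega>" using True \<omega> \<pi> by simp
    have OrbA: "Orb = set A" using B(5) A(5) True by (simp add: Orb_def)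
    have chicyc: "cyc \<chi> xs"
    proof (cases "xs = []")
      case True then show ?thesis by (simp add: cyc_def)
    next
      case False
      have "chain \<chi> xs"
      proof (rule chain_cong[OF cA1])
        fix x assume x: "x \<in> set (butlast xs)"
        then have x1: "x \<in> set xs" by (rule in_set_butlastD)
        have "g x \<in> set xs" using chain_in[OF cA1 x] .
        then have "x \<in> Orb" "x \<noteq> a" "g x \<noteq> a" using x1 xsOrb axs by auto
        then show "\<chi> x = g x" using chiv[of x] True by simp
      qed
      moreover have "\<chi> (last xs) = List.hd xs"
      proof -
        have "last xs \<in> set xs" using False by simp
        then have "last xs \<in> Orb" "last xs \<noteq> a" using xsOrb axs by auto
        then show ?thesis using chiv[of "last xs"] True cA2[OF False] cA3[OF False] by simp
      qed
      ultimately show ?thesis by (simp add: cyc_def)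
    qed
    have chiout2: "\<chi> x = x" if "x \<notin> set xs" for x
      using chiout[of x] that OrbA Axs by auto
    have chimain: "supp \<chi> = (if 2 \<le> length xs then set xs else {}) \<and> is_cycle \<chi> \<and>
         cyc_len \<chi> = (if 2 \<le> length xs then length xs else 0)"
      using dxs chicyc chiout2 by (rule cyc_main)
    have chiperm: "\<chi> permutes {..<a}"
    proof -
      have "\<chi> permutes set xs" using dxs chicyc chiout2 by (rule cyc_permutes)
      moreover have "set xs \<subseteq> {..<a}" using xsOrb Orba axs by auto
      ultimately show ?thesis by (rule permutes_subset)
    qed
    have cU: "card (supp \<omega> \<union> supp \<pi>) = cyc_len \<omega>" using \<pi>\<omega> by (simp add: cyc_len_def)
    have \<omega>id: "length xs = 0 \<Longrightarrow> \<omega> = id" using \<omega>main lenA by (intro supp_empty_id) simp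
    define L where "L = length xs"
    have cw: "cyc_len \<omega> = (if 2 \<le> Suc L then Suc L else 0)" using \<omega>main lenA L_def by simp
    have cc: "cyc_len \<chi> = (if 2 \<le> L then L else 0)" using chimain L_def by simp
    have ic: "is_cycle \<chi>" using chimain by simp
    show ?thesis
      unfolding cmain_def
    proof (intro exI[of _ \<chi>] conjI impI)
      show "\<chi> permutes {..<a}" by (rule chiperm)
      show "supp \<chi> \<inter> supp \<rho> = {}" by (rule disj)
      show "g' = \<chi> \<circ> \<rho>" by (rule comp)
    next
      assume e: "card (supp g') = card (supp g)"
      then have "L = 0" using cg cg' cU cw cc by (auto split: if_splits)
      then show "\<omega> = id \<or> \<pi> = id" using \<omega>id L_def by simp
      show "is_cycle \<chi>" using chimain by simp
      show "cyc_len \<chi> = cyc_len (\<pi> \<circ> \<omega>)" using \<open>L = 0\<close> L_def \<omega>id \<pi>\<omega> cc cyclen_id by simp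
    next
      assume e: "card (supp g') + 1 = card (supp g)" "\<omega> = \<pi>"
      then have "2 \<le> L" using cg cg' cU cw cc by (auto split: if_splits)
      then show "(is_cycle \<chi> \<and> cyc_len \<chi> + 1 = cyc_len \<omega>) \<or>
            (\<exists>\<omega>' \<pi>'. is_cycle \<omega>' \<and> is_cycle \<pi>' \<and> supp \<omega>' \<inter> supp \<pi>' = {} \<and>
               \<chi> = \<pi>' \<circ> \<omega>' \<and> cyc_len \<omega>' + cyc_len \<pi>' + 1 = cyc_len \<omega>)"
        using ic cc cw by auto
    next
      assume e: "card (supp g') + 1 = card (supp g)" "\<omega> \<noteq> \<pi>"
      then show "is_cycle \<chi>" "cyc_len \<chi> + 1 = cyc_len \<omega> + cyc_len \<pi>" using \<pi>\<omega> by auto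
    next
      assume e: "card (supp g') + 2 = card (supp g)"
      then have "L = 1" using cg cg' cU cw cc by (auto split: if_splits)
      then show "\<omega> = \<pi>" "is_cycle \<chi>" "cyc_len \<chi> + 2 = cyc_len \<omega>" using \<pi>\<omega> ic cc cw by auto
    next
      assume e: "card (supp g') + 3 = card (supp g)"
      then have False using cg cg' cU cw cc by (auto split: if_splits)
      then show "\<omega> = \<pi>" "cyc_len \<omega> = 3" "\<chi> = id" by auto
    qed
  next
    case False
    note ba = False
    show ?thesis
    proof (cases "b \<in> set A")
      case True
      have bxs: "b \<in> set xs" using True ba Axs by simp
      have setB: "set B = set A" using B(5) cyc_orbit[OF A(2) True] by simp
      have \<pi>\<omega>: "\<pi> = \<omega>" using \<omega>eq \<pi>eq setB by simp
      have OrbA: "Orb = set A" using setB by (simp add: Orb_def)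
      obtain us vs where xs: "xs = us @ b # vs" using split_list[OF bxs] by blast
      define ys where "ys = us @ [b]"
      have xsyv: "xs = ys @ vs" using xs ys_def by simp
      have xsne: "xs \<noteq> []" using xs by simp
      have dys: "distinct ys" and dvs: "distinct vs" and dyv: "set ys \<inter> set vs = {}"
        using dxs xsyv by auto
      have bvs: "b \<notin> set vs" and bus: "b \<notin> set us" using dxs xs by auto
      have cys: "chain g ys" and cvs: "chain g vs" and gb: "vs \<noteq> [] \<Longrightarrow> g b = List.hd vs"
        using cA1 unfolding xsyv chain_append ys_def by auto
      have lastvs: "vs \<noteq> [] \<Longrightarrow> last vs = last xs" using xsyv by simp
      have vsb: "vs = [] \<Longrightarrow> last xs = b" using xs by simp
      have gane: "g a \<noteq> a" using cA2[OF xsne] axs xsne by (metis hd_in_set)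
      define \<omega>' where "\<omega>' = (\<lambda>x. if x \<in> set ys then \<chi> x else x)"
      define \<pi>' where "\<pi>' = (\<lambda>x. if x \<in> set vs then \<chi> x else x)"
      have ysO: "set ys \<subseteq> Orb - {a}" and vsO: "set vs \<subseteq> Orb - {a}"
        using xsyv xsOrb axs by auto
      have cyc\<omega>': "cyc \<omega>' ys"
      proof -
        have "chain \<omega>' ys"
        proof (rule chain_cong[OF cys])
          fix x assume x: "x \<in> set (butlast ys)"
          then have x1: "x \<in> set ys" by (rule in_set_butlastD)
          have "g x \<in> set ys" using chain_in[OF cys x] .
          then have "x \<in> Orb" "x \<noteq> a" "g x \<noteq> a" "x \<noteq> b" using x1 ysO xsyv axs x bus
            by (auto simp: ys_def)
          then show "\<omega>' x = g x" using chiv[of x] x1 by (simp add: \<omega>'_def)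
        qed
        moreover have "\<omega>' (last ys) = List.hd ys"
        proof -
          have "last ys = b" "b \<in> set ys" by (auto simp: ys_def)
          moreover have "List.hd ys = g a" using cA2[OF xsne] xs by (cases us) (simp_all add: ys_def)
          ultimately show ?thesis using chiv[of b] bO ba gane by (simp add: \<omega>'_def)
        qed
        ultimately show ?thesis by (simp add: cyc_def)
      qed
      have cyc\<pi>': "cyc \<pi>' vs"
      proof (cases "vs = []")
        case True then show ?thesis by (simp add: cyc_def)
      next
        case False
        have "chain \<pi>' vs"
        proof (rule chain_cong[OF cvs])
          fix x assume x: "x \<in> set (butlast vs)"
          then have x1: "x \<in> set vs" by (rule in_set_butlastD)
          have "g x \<in> set vs" using chain_in[OF cvs x] .
          then have "x \<in> Orb" "x \<noteq> a" "g x \<noteq> a" "x \<noteq> b" using x1 vsO xsyv axs bvs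
            by auto
          then show "\<pi>' x = g x" using chiv[of x] x1 by (simp add: \<pi>'_def)
        qed
        moreover have "\<pi>' (last vs) = List.hd vs"
        proof -
          have l: "last vs \<in> set vs" using False by simp
          then have "last vs \<in> Orb" "last vs \<noteq> a" "last vs \<noteq> b" using vsO bvs by auto
          moreover have "g (last vs) = a" using cA3[OF xsne] lastvs[OF False] by simp
          ultimately show ?thesis using chiv[of "last vs"] l gb[OF False] by (simp add: \<pi>'_def)
        qed
        ultimately show ?thesis by (simp add: cyc_def)
      qed
      have out\<omega>': "\<omega>' x = x" if "x \<notin> set ys" for x using that by (simp add: \<omega>'_def)
      have out\<pi>': "\<pi>' x = x" if "x \<notin> set vs" for x using that by (simp add: \<pi>'_def)
      have m\<omega>': "supp \<omega>' = (if 2 \<le> length ys then set ys else {}) \<and> is_cycle \<omega>' \<and>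
         cyc_len \<omega>' = (if 2 \<le> length ys then length ys else 0)"
        using dys cyc\<omega>' out\<omega>' by (rule cyc_main)
      have m\<pi>': "supp \<pi>' = (if 2 \<le> length vs then set vs else {}) \<and> is_cycle \<pi>' \<and>
         cyc_len \<pi>' = (if 2 \<le> length vs then length vs else 0)"
        using dvs cyc\<pi>' out\<pi>' by (rule cyc_main)
      have chi_eq: "\<chi> = \<pi>' \<circ> \<omega>'"
      proof
        fix x
        show "\<chi> x = (\<pi>' \<circ> \<omega>') x"
        proof (cases "x \<in> set ys")
          case True
          have "\<omega>' x \<in> set ys" using cyc_closed[OF cyc\<omega>' True] .
          then have "\<omega>' x \<notin> set vs" using dyv by auto
          then show ?thesis using True by (simp add: \<omega>'_def \<pi>'_def)
        next
          case False
          show ?thesis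
          proof (cases "x \<in> set vs")
            case True then show ?thesis using False by (simp add: \<omega>'_def \<pi>'_def)
          next
            case False2: False
            then have "x \<notin> Orb - {a}" using False OrbA Axs xsyv by auto
            then show ?thesis using False False2 chiout by (simp add: \<omega>'_def \<pi>'_def)
          qed
        qed
      qed
      have sdisj: "supp \<omega>' \<inter> supp \<pi>' = {}" using m\<omega>' m\<pi>' dyv by auto
      have cc: "cyc_len \<chi> = cyc_len \<omega>' + cyc_len \<pi>'"
      proof -
        have "supp \<chi> = supp \<omega>' \<union> supp \<pi>'"
        proof (intro set_eqI)
          fix x
          have "x \<notin> set ys \<Longrightarrow> x \<notin> set vs \<Longrightarrow> \<chi> x = x"
            using chiout[of x] OrbA Axs xsyv by auto
          then show "x \<in> supp \<chi> \<longleftrightarrow> x \<in> supp \<omega>' \<union> supp \<pi>'"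
            using dyv unfolding supp_def by (auto simp: \<omega>'_def \<pi>'_def)
        qed
        then show ?thesis using sdisj m\<omega>' m\<pi>' unfolding cyc_len_def by (simp add: card_Un_disjoint)
      qed
      have chiperm: "\<chi> permutes {..<a}"
      proof -
        have "\<omega>' permutes set ys" using dys cyc\<omega>' out\<omega>' by (rule cyc_permutes)
        moreover have "set ys \<subseteq> {..<a}" using ysO Orba by auto
        ultimately have p1: "\<omega>' permutes {..<a}" by (rule permutes_subset)
        have "\<pi>' permutes set vs" using dvs cyc\<pi>' out\<pi>' by (rule cyc_permutes)
        moreover have "set vs \<subseteq> {..<a}" using vsO Orba by auto
        ultimately have p2: "\<pi>' permutes {..<a}" by (rule permutes_subset)
        show ?thesis unfolding chi_eq using p1 p2 by (rule permutes_compose)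
      qed
      have cU: "card (supp \<omega> \<union> supp \<pi>) = cyc_len \<omega>" using \<pi>\<omega> by (simp add: cyc_len_def)
      define J where "J = length ys"
      define M where "M = length vs"
      have J1: "1 \<le> J" by (simp add: J_def ys_def)
      have cw: "cyc_len \<omega> = Suc (J + M)" using \<omega>main lenA xsyv J_def M_def J1 by simp
      have cw': "cyc_len \<omega>' = (if 2 \<le> J then J else 0)" using m\<omega>' J_def by simp
      have cp': "cyc_len \<pi>' = (if 2 \<le> M then M else 0)" using m\<pi>' M_def by simp
      have w'id: "J < 2 \<Longrightarrow> \<omega>' = id" using m\<omega>' J_def by (intro supp_empty_id) simp
      have p'id: "M < 2 \<Longrightarrow> \<pi>' = id" using m\<pi>' M_def by (intro supp_empty_id) simp
      show ?thesis
        unfolding cmain_def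
      proof (intro exI[of _ \<chi>] conjI impI)
        show "\<chi> permutes {..<a}" by (rule chiperm)
        show "supp \<chi> \<inter> supp \<rho> = {}" by (rule disj)
        show "g' = \<chi> \<circ> \<rho>" by (rule comp)
      next
        assume e: "card (supp g') = card (supp g)"
        then have False using cg cg' cU cw cc cw' cp' by (auto split: if_splits)
        then show "\<omega> = id \<or> \<pi> = id" "is_cycle \<chi>" "cyc_len \<chi> = cyc_len (\<pi> \<circ> \<omega>)" by auto
      next
        assume e: "card (supp g') + 1 = card (supp g)" "\<omega> = \<pi>"
        then have "cyc_len \<omega>' + cyc_len \<pi>' + 1 = cyc_len \<omega>" using cg cg' cU cc by simp
        then show "(is_cycle \<chi> \<and> cyc_len \<chi> + 1 = cyc_len \<omega>) \<or>
            (\<exists>\<omega>' \<pi>'. is_cycle \<omega>' \<and> is_cycle \<pi>' \<and> supp \<omega>' \<inter> supp \<pi>' = {} \<and>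
               \<chi> = \<pi>' \<circ> \<omega>' \<and> cyc_len \<omega>' + cyc_len \<pi>' + 1 = cyc_len \<omega>)"
          using m\<omega>' m\<pi>' sdisj chi_eq by blast
      next
        assume e: "card (supp g') + 1 = card (supp g)" "\<omega> \<noteq> \<pi>"
        then show "is_cycle \<chi>" "cyc_len \<chi> + 1 = cyc_len \<omega> + cyc_len \<pi>" using \<pi>\<omega> by auto
      next
        assume e: "card (supp g') + 2 = card (supp g)"
        then have "(J = 1 \<and> cyc_len \<pi>' = M) \<or> (M = 1 \<and> cyc_len \<omega>' = J)"
          using cg cg' cU cw cc cw' cp' by (auto split: if_splits)
        then have "(\<chi> = \<pi>' \<and> cyc_len \<pi>' = M \<and> J = 1) \<or> (\<chi> = \<omega>' \<and> cyc_len \<omega>' = J \<and> M = 1)"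
          using w'id p'id chi_eq by auto
        then show "\<omega> = \<pi>" "is_cycle \<chi>" "cyc_len \<chi> + 2 = cyc_len \<omega>"
          using \<pi>\<omega> m\<omega>' m\<pi>' cw by auto
      next
        assume e: "card (supp g') + 3 = card (supp g)"
        then have "J = 1" "M = 1" using cg cg' cU cw cc cw' cp' by (auto split: if_splits)
        then show "\<omega> = \<pi>" "cyc_len \<omega> = 3" "\<chi> = id" using \<pi>\<omega> cw w'id p'id chi_eq by auto
      qed
    next
      case False
      note bA = False
      obtain zs where Bzs: "B = b # zs" using B(3,4) by (cases B) auto
      have cB1: "chain g zs" and cB2: "zs \<noteq> [] \<Longrightarrow> g b = List.hd zs"
        and cB3: "zs \<noteq> [] \<Longrightarrow> g (last zs) = b" and cB4: "zs = [] \<Longrightarrow> g b = b"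
        using B(2) unfolding Bzs cyc_def by (auto simp: chain_Cons)
      have bzs: "b \<notin> set zs" and dzs: "distinct zs" using B(1) Bzs by auto
      have lenB: "length B = Suc (length zs)" using Bzs by simp
      have ABd: "set A \<inter> set B = {}"
      proof (rule ccontr)
        assume "set A \<inter> set B \<noteq> {}"
        then obtain y where "y \<in> set A" "y \<in> set B" by auto
        then have "set A = set B" using cyc_orbit[OF A(2)] cyc_orbit[OF B(2)] by metis
        then show False using bA bB by simp
      qed
      have aB: "a \<notin> set B" using ABd aA by auto
      have bxs: "b \<notin> set xs" using bA Axs by simp
      define L where "L = b # xs @ zs"
      have dL: "distinct L" using dxs dzs bzs bxs ABd Axs Bzs by (auto simp: L_def)
      have setL: "set L = Orb - {a}" using Axs Bzs axs aB by (auto simp: L_def Orb_def)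
      have zsO: "set zs \<subseteq> Orb - {a}" and xsO: "set xs \<subseteq> Orb - {a}" and bO': "b \<in> Orb - {a}"
        using setL by (auto simp: L_def)
      have azs: "a \<notin> set zs" using aB Bzs by simp
      have cyc\<chi>: "cyc \<chi> L"
      proof -
        have c1: "chain \<chi> xs"
        proof (rule chain_cong[OF cA1])
          fix x assume x: "x \<in> set (butlast xs)"
          then have x1: "x \<in> set xs" by (rule in_set_butlastD)
          have "g x \<in> set xs" using chain_in[OF cA1 x] .
          then have "x \<in> Orb" "x \<noteq> a" "g x \<noteq> a" "x \<noteq> b" using x1 xsO axs bxs by auto
          then show "\<chi> x = g x" using chiv[of x] by simp
        qed
        have c2: "chain \<chi> zs"
        proof (rule chain_cong[OF cB1])
          fix x assume x: "x \<in> set (butlast zs)"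
          then have x1: "x \<in> set zs" by (rule in_set_butlastD)
          have "g x \<in> set zs" using chain_in[OF cB1 x] .
          then have "x \<in> Orb" "x \<noteq> a" "g x \<noteq> a" "x \<noteq> b" using x1 zsO azs bzs by auto
          then show "\<chi> x = g x" using chiv[of x] by simp
        qed
        have c3: "\<chi> (last xs) = List.hd zs" if "xs \<noteq> []" "zs \<noteq> []"
        proof -
          have "last xs \<in> set xs" using that by simp
          then have "last xs \<in> Orb" "last xs \<noteq> a" "last xs \<noteq> b" using xsO bxs by auto
          then show ?thesis using chiv[of "last xs"] cA3[OF that(1)] cB2[OF that(2)] by simp
        qed
        have c4: "\<chi> b = List.hd (xs @ zs)" if "xs @ zs \<noteq> []"
        proof (cases "xs = []")
          case True
          then have "zs \<noteq> []" using that by simp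
          then show ?thesis using chiv[of b] bO' True cA4[OF True] cB2 by simp
        next
          case False
          have "g a \<noteq> a" using cA2[OF False] axs False by (metis hd_in_set)
          then show ?thesis using chiv[of b] bO' False cA2[OF False] by simp
        qed
        have c5: "\<chi> (last L) = b"
        proof (cases "zs = []")
          case False
          have "last zs \<in> set zs" using False by simp
          then have "last zs \<in> Orb" "last zs \<noteq> a" "last zs \<noteq> b" using zsO bzs by auto
          moreover have "last L = last zs" using False by (simp add: L_def)
          ultimately show ?thesis using chiv[of "last zs"] cB3[OF False] ba by simp
        next
          case True
          show ?thesis
          proof (cases "xs = []")
            case True2: True
            then show ?thesis using True chiv[of b] bO' cA4 cB4 by (simp add: L_def)
          next
            case False
            have "last xs \<in> set xs" using False by simp
            then have "last xs \<in> Orb" "last xs \<noteq> a" "last xs \<noteq> b" using xsO bxs by auto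
            moreover have "last L = last xs" using False True by (simp add: L_def)
            ultimately show ?thesis using chiv[of "last xs"] cA3[OF False] cB4[OF True] by simp
          qed
        qed
        have "chain \<chi> L" unfolding L_def chain_Cons chain_append using c1 c2 c3 c4 by auto
        then show ?thesis using c5 by (simp add: cyc_def L_def)
      qed
      have outL: "\<chi> x = x" if "x \<notin> set L" for x using chiout that setL by simp
      have mL: "supp \<chi> = (if 2 \<le> length L then set L else {}) \<and> is_cycle \<chi> \<and>
         cyc_len \<chi> = (if 2 \<le> length L then length L else 0)"
        using dL cyc\<chi> outL by (rule cyc_main)
      have chiperm: "\<chi> permutes {..<a}"
      proof -
        have "\<chi> permutes set L" using dL cyc\<chi> outL by (rule cyc_permutes)
        moreover have "set L \<subseteq> {..<a}" using setL Orba by auto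
        ultimately show ?thesis by (rule permutes_subset)
      qed
      have cU: "card (supp \<omega> \<union> supp \<pi>) = cyc_len \<omega> + cyc_len \<pi>"
      proof -
        have "supp \<omega> \<inter> supp \<pi> = {}" using supp\<omega> supp\<pi> ABd by auto
        moreover have "finite (supp \<omega>)" "finite (supp \<pi>)" using supp\<omega> supp\<pi> by auto
        ultimately show ?thesis unfolding cyc_len_def by (simp add: card_Un_disjoint)
      qed
      define X where "X = length xs"
      define Z where "Z = length zs"
      have cw: "cyc_len \<omega> = (if 1 \<le> X then Suc X else 0)" using \<omega>main lenA X_def by auto
      have cp: "cyc_len \<pi> = (if 1 \<le> Z then Suc Z else 0)" using \<pi>main lenB Z_def by auto
      have cc: "cyc_len \<chi> = (if 1 \<le> X + Z then Suc (X + Z) else 0)" using mL X_def Z_def by (auto simp: L_def)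
      have ic: "is_cycle \<chi>" using mL by simp
      have wid: "X = 0 \<Longrightarrow> \<omega> = id" using \<omega>main lenA X_def by (intro supp_empty_id) simp
      have pid: "Z = 0 \<Longrightarrow> \<pi> = id" using \<pi>main lenB Z_def by (intro supp_empty_id) simp
      have wp: "\<omega> = \<pi> \<Longrightarrow> X = 0 \<and> Z = 0"
      proof -
        assume e: "\<omega> = \<pi>"
        have "\<pi> a = a" using aB by (simp add: \<pi>eq)
        then have "\<omega> a = a" using e by simp
        then have "X = 0" using aA cA2 axs X_def by (auto simp: \<omega>eq) (metis hd_in_set)
        moreover have "\<omega> b = b" using bA by (simp add: \<omega>eq)
        then have "\<pi> b = b" using e by simp
        then have "Z = 0" using bB cB2 bzs Z_def by (auto simp: \<pi>eq) (metis hd_in_set)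
        ultimately show ?thesis by simp
      qed
      show ?thesis
        unfolding cmain_def
      proof (intro exI[of _ \<chi>] conjI impI)
        show "\<chi> permutes {..<a}" by (rule chiperm)
        show "supp \<chi> \<inter> supp \<rho> = {}" by (rule disj)
        show "g' = \<chi> \<circ> \<rho>" by (rule comp)
      next
        assume e: "card (supp g') = card (supp g)"
        then have "X = 0 \<or> Z = 0" using cg cg' cU cw cp cc by (auto split: if_splits)
        then show "\<omega> = id \<or> \<pi> = id" using wid pid by auto
        show "is_cycle \<chi>" by (rule ic)
        show "cyc_len \<chi> = cyc_len (\<pi> \<circ> \<omega>)"
        proof (cases "X = 0")
          case True then show ?thesis using wid cc cp by simp
        next
          case False then have "Z = 0" using \<open>X = 0 \<or> Z = 0\<close> by simp
          then show ?thesis using pid cc cw by simp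
        qed
      next
        assume e: "card (supp g') + 1 = card (supp g)" "\<omega> = \<pi>"
        then have False using wp cg cg' cU cw cp cc by (auto split: if_splits)
        then show "(is_cycle \<chi> \<and> cyc_len \<chi> + 1 = cyc_len \<omega>) \<or>
            (\<exists>\<omega>' \<pi>'. is_cycle \<omega>' \<and> is_cycle \<pi>' \<and> supp \<omega>' \<inter> supp \<pi>' = {} \<and>
               \<chi> = \<pi>' \<circ> \<omega>' \<and> cyc_len \<omega>' + cyc_len \<pi>' + 1 = cyc_len \<omega>)" by simp
      next
        assume e: "card (supp g') + 1 = card (supp g)" "\<omega> \<noteq> \<pi>"
        then show "is_cycle \<chi>" "cyc_len \<chi> + 1 = cyc_len \<omega> + cyc_len \<pi>"
          using ic cg cg' cU cw cp cc by (auto split: if_splits)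
      next
        assume e: "card (supp g') + 2 = card (supp g)"
        then have False using cg cg' cU cw cp cc by (auto split: if_splits)
        then show "\<omega> = \<pi>" "is_cycle \<chi>" "cyc_len \<chi> + 2 = cyc_len \<omega>" by auto
      next
        assume e: "card (supp g') + 3 = card (supp g)"
        then have False using cg cg' cU cw cp cc by (auto split: if_splits)
        then show "\<omega> = \<pi>" "cyc_len \<omega> = 3" "\<chi> = id" by auto
      qed
    qed
  qed
qed

theorem proposition4p4:
  fixes n :: nat and \<sigma> \<tau> \<rho> :: "nat \<Rightarrow> nat"
  assumes "2 \<le> n"
    and "\<sigma> permutes {..<n}" and "\<tau> permutes {..<n}"
    and "ct n \<sigma> \<noteq> ct n \<tau>"
    and "\<rho> permutes {..<n}"
    and "supp \<rho> \<inter> supp (cycle_of (\<tau> \<circ> inv \<sigma>) (n - 1)) = {}"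
    and "supp \<rho> \<inter> supp (cycle_of (\<tau> \<circ> inv \<sigma>) (\<sigma> (n - 1))) = {}"
    and "if cycle_of (\<tau> \<circ> inv \<sigma>) (n - 1) \<noteq> cycle_of (\<tau> \<circ> inv \<sigma>) (\<sigma> (n - 1))
         then \<tau> \<circ> inv \<sigma> = cycle_of (\<tau> \<circ> inv \<sigma>) (\<sigma> (n - 1)) \<circ> cycle_of (\<tau> \<circ> inv \<sigma>) (n - 1) \<circ> \<rho>
         else \<tau> \<circ> inv \<sigma> = cycle_of (\<tau> \<circ> inv \<sigma>) (n - 1) \<circ> \<rho>"
  shows "let \<omega> = cycle_of (\<tau> \<circ> inv \<sigma>) (n - 1); \<pi> = cycle_of (\<tau> \<circ> inv \<sigma>) (\<sigma> (n - 1)) in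
    \<exists>\<chi>. \<chi> permutes {..<n - 1} \<and> supp \<chi> \<inter> supp \<rho> = {} \<and>
      ct n \<tau> \<circ> inv (ct n \<sigma>) = \<chi> \<circ> \<rho> \<and>
      (hd (n - 1) (ct n \<sigma>) (ct n \<tau>) = hd n \<sigma> \<tau> \<longrightarrow>
         (\<omega> = id \<or> \<pi> = id) \<and> is_cycle \<chi> \<and> cyc_len \<chi> = cyc_len (\<pi> \<circ> \<omega>)) \<and>
      (hd (n - 1) (ct n \<sigma>) (ct n \<tau>) + 1 = hd n \<sigma> \<tau> \<longrightarrow>
         (\<omega> = \<pi> \<longrightarrow>
            (is_cycle \<chi> \<and> cyc_len \<chi> + 1 = cyc_len \<omega>) \<or>
            (\<exists>\<omega>' \<pi>'. is_cycle \<omega>' \<and> is_cycle \<pi>' \<and> supp \<omega>' \<inter> supp \<pi>' = {} \<and>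
               \<chi> = \<pi>' \<circ> \<omega>' \<and> cyc_len \<omega>' + cyc_len \<pi>' + 1 = cyc_len \<omega>)) \<and>
         (\<omega> \<noteq> \<pi> \<longrightarrow> is_cycle \<chi> \<and> cyc_len \<chi> + 1 = cyc_len \<omega> + cyc_len \<pi>)) \<and>
      (hd (n - 1) (ct n \<sigma>) (ct n \<tau>) + 2 = hd n \<sigma> \<tau> \<longrightarrow>
         \<omega> = \<pi> \<and> is_cycle \<chi> \<and> cyc_len \<chi> + 2 = cyc_len \<omega>) \<and>
      (hd (n - 1) (ct n \<sigma>) (ct n \<tau>) + 3 = hd n \<sigma> \<tau> \<longrightarrow>
         \<omega> = \<pi> \<and> cyc_len \<omega> = 3 \<and> \<chi> = id)"
proof -
  let ?a = "n - 1"
  let ?g = "\<tau> \<circ> inv \<sigma>"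
  let ?g' = "ct n \<tau> \<circ> inv (ct n \<sigma>)"
  have n1: "1 \<le> n" using assms(1) by simp
  have gp: "?g permutes {..<n}" using permutes_compose[OF permutes_inv[OF assms(2)] assms(3)] .
  have bn: "\<sigma> ?a < n" using perm_lt[OF assms(2)] assms(1) by simp
  have inv1: "inv \<sigma> (\<sigma> z) = z" for z using assms(2) permutes_inverses by metis
  have g'1: "?g' y = (if y = \<sigma> ?a then (if ?g ?a = ?a then ?g (\<sigma> ?a) else ?g ?a)
                else (if ?g y = ?a then ?g (\<sigma> ?a) else ?g y))" if "y < ?a" for y
    using g'_formula[OF assms(2) assms(3) n1 that] inv1 by simp
  have pg': "?g' permutes {..<?a}"
    using permutes_compose[OF permutes_inv[OF ct_permutes[OF assms(2) n1]] ct_permutes[OF assms(3) n1]] .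
  have g'2: "?g' y = y" if "?a \<le> y" for y using permutes_not_in[OF pg', of y] that by simp
  have h1: "hd n \<sigma> \<tau> = card (supp ?g)" using hd_supp[OF assms(2) assms(3)] .
  have h2: "hd (n - 1) (ct n \<sigma>) (ct n \<tau>) = card (supp ?g')"
    using hd_supp[OF ct_permutes[OF assms(2) n1] ct_permutes[OF assms(3) n1]] .
  obtain \<chi> where "cmain n ?a ?g ?g' \<rho> (cycle_of ?g ?a) (cycle_of ?g (\<sigma> ?a)) \<chi>"
    using main_g[OF assms(1) refl gp bn g'1 g'2 assms(5) refl refl assms(6) assms(7) assms(8)] by blast
  then show ?thesis unfolding Let_def h1 h2 cmain_def by blast
qed

end
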